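(* Let $1\leqslant p<\infty$, $A\in U^p(\mathbb{R},\mathcal{L}(L^2))$ and $B\in V^p(\mathbb{R},\mathcal{L}(L^2))$. Then for all $u\in U^p(\mathbb{R},L^2)$ and $v\in V^p(\mathbb{R},L^2)$ we have $Au\in U^p(\mathbb{R},L^2)$, $Bv\in V^p(\mathbb{R},L^2)$ and $$\|Au\|_{U^p(\mathbb{R},L^2)}\leqslant\|A\|_{U^p(\mathbb{R},\mathcal{L}(L^2))}\|u\|_{U^p(\mathbb{R},L^2)},\qquad\|Bv\|_{V^p(\mathbb{R},L^2)}\leqslant\|B\|_{V^p(\mathbb{R},\mathcal{L}(L^2))}\|v\|_{V^p(\mathbb{R},L^2)}.$$ If in addition $A$, respectively $B$, commutes with the Fourier multipliers $P_\lambda$ for all $\lambda\in2^{\mathbb{Z}}$, then $$\|Au\|_{\ell^2U^p(\mathbb{R},L^2)}\leqslant\|A\|_{U^p(\mathbb{R},\mathcal{L}(L^2))}\|u\|_{\ell^2U^p(\mathbb{R},L^2)},\qquad\|Bv\|_{\ell^2V^p(\mathbb{R},L^2)}\leqslant\|B\|_{V^p(\mathbb{R},\mathcal{L}(L^2))}\|v\|_{\ell^2V^p(\mathbb{R},L^2)}.$$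
   Context: $L^2=L^2(\mathbb{R}^d;\mathbb{C}^N)$, $\mathcal{L}(L^2)$ the bounded operators with operator norm. For a Banach space $E$ ($E=L^2$ or $\mathcal{L}(L^2)$) and $1\leqslant p<\infty$: step functions are $u(t)=\sum_{j=1}^N\mathbb{1}_{[t_j,t_{j+1})}(t)f_j$ with $t_1<\dots<t_N$, $t_{N+1}=\infty$, $f_j\in E$; a $U^p$-atom is a step function with $\sum_j\|f_j\|_E^p=1$; $U^p(\mathbb{R},E)$ consists of $\sum c_ju_j$, $(c_j)\in\ell^1$, $u_j$ atoms, normed by $\inf\sum|c_j|$. $V^p(\mathbb{R},E)$ consists of right-continuous $v:\mathbb{R}\to E$ with $v(t)\to0$ as $t\to-\infty$ and $\|v\|_{V^p}=\sup_t\|v(t)\|_E+\sup_{t_1<\dots<t_N}(\sum_{j=1}^{N-1}\|v(t_{j+1})-v(t_j)\|_E^p)^{1/p}<\infty$. $(Au)(t)=A(t)u(t)$. $P_\lambda$ ($\lambda\in2^\mathbb{Z}$): smooth Littlewood–Paley projections to $|\xi|\approx\lambda$ summing to $I$; $\|u\|_{\ell^2U^p}=(\sum_\lambda\|P_\lambda u\|^2_{U^p})^{1/2}$, $\|v\|_{\ell^2V^p}=(\sum_\lambda\|P_\lambda v\|^2_{V^p})^{1/2}$. *)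

theory Defs
  imports "HOL-Analysis.Analysis"
begin

text \<open>Step function  sum_j 1_[t_j,t_{j+1})(t) f_j  with t_{N+1} = infinity.\<close>
definition step_fun :: "real list \<Rightarrow> 'a::real_normed_vector list \<Rightarrow> real \<Rightarrow> 'a" where
  "step_fun ts fs t =
     (\<Sum>j<length ts. if ts!j \<le> t \<and> (Suc j < length ts \<longrightarrow> t < ts!Suc j) then fs!j else 0)"

definition Up_atom :: "real \<Rightarrow> (real \<Rightarrow> 'a::real_normed_vector) \<Rightarrow> bool" where
  "Up_atom p a \<longleftrightarrow> (\<exists>ts fs. length fs = length ts \<and> ts \<noteq> [] \<and> sorted_wrt (<) ts \<and>
      a = step_fun ts fs \<and> (\<Sum>j<length fs. norm (fs!j) powr p) = 1)"

definition Up_repr :: "real \<Rightarrow> (real \<Rightarrow> 'a::real_normed_vector) \<Rightarrow> (nat \<Rightarrow> real) \<Rightarrow> (nat \<Rightarrow> real \<Rightarrow> 'a) \<Rightarrow> bool" where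
  "Up_repr p u c a \<longleftrightarrow> summable (\<lambda>j. \<bar>c j\<bar>) \<and> (\<forall>j. c j \<noteq> 0 \<longrightarrow> Up_atom p (a j)) \<and>
      (\<forall>t. (\<lambda>j. c j *\<^sub>R a j t) sums u t)"

definition in_Up :: "real \<Rightarrow> (real \<Rightarrow> 'a::real_normed_vector) \<Rightarrow> bool" where
  "in_Up p u \<longleftrightarrow> (\<exists>c a. Up_repr p u c a)"

definition Up_norm :: "real \<Rightarrow> (real \<Rightarrow> 'a::real_normed_vector) \<Rightarrow> real" where
  "Up_norm p u = Inf {s. \<exists>c a. Up_repr p u c a \<and> s = (\<Sum>j. \<bar>c j\<bar>)}"

definition pvar_sum :: "real \<Rightarrow> (real \<Rightarrow> 'a::real_normed_vector) \<Rightarrow> real list \<Rightarrow> real" where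
  "pvar_sum p v ts = (\<Sum>j<length ts - 1. norm (v (ts!Suc j) - v (ts!j)) powr p) powr (1/p)"

definition in_Vp :: "real \<Rightarrow> (real \<Rightarrow> 'a::real_normed_vector) \<Rightarrow> bool" where
  "in_Vp p v \<longleftrightarrow> (\<forall>t. continuous (at_right t) v) \<and> (v \<longlongrightarrow> 0) at_bot \<and>
      bdd_above (range (\<lambda>t. norm (v t))) \<and>
      bdd_above (pvar_sum p v ` {ts. sorted_wrt (<) ts})"

definition Vp_norm :: "real \<Rightarrow> (real \<Rightarrow> 'a::real_normed_vector) \<Rightarrow> real" where
  "Vp_norm p v = (SUP t. norm (v t)) + (SUP ts\<in>{ts. sorted_wrt (<) ts}. pvar_sum p v ts)"

text \<open>Littlewood--Paley square-sum norms; P k stands for P_{2^k}, applied pointwise in time.\<close>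
definition l2Up_sq :: "real \<Rightarrow> (int \<Rightarrow> ('a::real_normed_vector \<Rightarrow>\<^sub>L 'a)) \<Rightarrow> (real \<Rightarrow> 'a) \<Rightarrow> int \<Rightarrow> real" where
  "l2Up_sq p P u k = (Up_norm p (\<lambda>t. blinfun_apply (P k) (u t)))\<^sup>2"

definition l2Vp_sq :: "real \<Rightarrow> (int \<Rightarrow> ('a::real_normed_vector \<Rightarrow>\<^sub>L 'a)) \<Rightarrow> (real \<Rightarrow> 'a) \<Rightarrow> int \<Rightarrow> real" where
  "l2Vp_sq p P v k = (Vp_norm p (\<lambda>t. blinfun_apply (P k) (v t)))\<^sup>2"

definition l2Up_norm :: "real \<Rightarrow> (int \<Rightarrow> ('a::real_normed_vector \<Rightarrow>\<^sub>L 'a)) \<Rightarrow> (real \<Rightarrow> 'a) \<Rightarrow> real" where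
  "l2Up_norm p P u = sqrt (infsum (l2Up_sq p P u) UNIV)"

definition l2Vp_norm :: "real \<Rightarrow> (int \<Rightarrow> ('a::real_normed_vector \<Rightarrow>\<^sub>L 'a)) \<Rightarrow> (real \<Rightarrow> 'a) \<Rightarrow> real" where
  "l2Vp_norm p P v = sqrt (infsum (l2Vp_sq p P v) UNIV)"

end

theory Submission
  imports Defs
begin


definition Sset :: "real list \<Rightarrow> real \<Rightarrow> nat set" where
  "Sset ts t = {j. j < length ts \<and> ts!j \<le> t}"

lemma Sset_finite[simp]: "finite (Sset ts t)"
  unfolding Sset_def by auto

lemma Sset_down:
  assumes "sorted_wrt (<) ts" "j \<in> Sset ts t" "i \<le> j"
  shows "i \<in> Sset ts t"
proof (cases "i = j")
  case False
  with assms have "ts!i < ts!j" unfolding Sset_def by (auto simp: sorted_wrt_iff_nth_less)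
  with assms show ?thesis unfolding Sset_def by auto
qed (use assms in auto)

lemma Sset_eq:
  assumes "sorted_wrt (<) ts"
  shows "Sset ts t = {..<card (Sset ts t)}"
proof (cases "Sset ts t = {}")
  case True then show ?thesis by simp
next
  case False
  define m where "m = Max (Sset ts t)"
  have m: "m \<in> Sset ts t" using False m_def by simp
  have "Sset ts t = {..m}"
  proof
    show "Sset ts t \<subseteq> {..m}" using m_def by auto
    show "{..m} \<subseteq> Sset ts t" using Sset_down[OF assms m] by auto
  qed
  then show ?thesis by (simp flip: lessThan_Suc_atMost)
qed

lemma Sset_card_le: "card (Sset ts t) \<le> length ts"
proof -
  have "Sset ts t \<subseteq> {..<length ts}" unfolding Sset_def by auto
  then show ?thesis using card_mono[of "{..<length ts}"] by fastforce
qed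

lemma step_fun_char:
  assumes "sorted_wrt (<) ts"
  shows "step_fun ts fs t = (if card (Sset ts t) = 0 then 0 else fs ! (card (Sset ts t) - 1))"
proof -
  define n where "n = card (Sset ts t)"
  have S: "Sset ts t = {..<n}" unfolding n_def by (rule Sset_eq[OF assms])
  have nle: "n \<le> length ts" using Sset_card_le n_def by simp
  have cond: "(ts!j \<le> t \<and> (Suc j < length ts \<longrightarrow> t < ts!Suc j)) \<longleftrightarrow> (0 < n \<and> j = n - 1)"
    if "j < length ts" for j
  proof -
    have m: "j \<in> Sset ts t \<longleftrightarrow> j < n" using S by simp
    have m2: "Suc j \<in> Sset ts t \<longleftrightarrow> Suc j < n" using S by simp
    have "ts!j \<le> t \<longleftrightarrow> j < n" using m that unfolding Sset_def by simp
    moreover have "(Suc j < length ts \<longrightarrow> t < ts!Suc j) \<longleftrightarrow> \<not> Suc j < n"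
      by (cases "Suc j < length ts") (use m2 nle in \<open>auto simp: Sset_def\<close>)
    ultimately show ?thesis by auto
  qed
  have "step_fun ts fs t = (\<Sum>j<length ts. if 0 < n \<and> j = n - 1 then fs!j else 0)"
    unfolding step_fun_def by (rule sum.cong) (auto simp: cond)
  also have "\<dots> = (if n = 0 then 0 else fs!(n-1))"
    using nle by (auto simp: sum.delta')
  finally show ?thesis by (simp add: n_def)
qed

lemma step_fun_scale:
  "length fs = length ts \<Longrightarrow> step_fun ts (map (\<lambda>x. c *\<^sub>R x) fs) t = c *\<^sub>R step_fun ts fs t"
  unfolding step_fun_def by (auto simp: scaleR_sum_right intro!: sum.cong)

lemma step_fun_lin:
  "length fs = length ts \<Longrightarrow> step_fun ts (map (blinfun_apply L) fs) t = blinfun_apply L (step_fun ts fs t)"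
  unfolding step_fun_def by (auto simp: blinfun.sum_right intro!: sum.cong)

lemma step_fun_zero:
  "(\<forall>x\<in>set fs. x = 0) \<Longrightarrow> length fs = length ts \<Longrightarrow> step_fun ts fs t = 0"
  unfolding step_fun_def by (auto intro!: sum.neutral)

lemma atom_norm_le:
  assumes "Up_atom p a" "p > 0"
  shows "norm (a t) \<le> 1"
proof -
  obtain ts fs where H: "length fs = length ts" "sorted_wrt (<) ts" "a = step_fun ts fs"
     "(\<Sum>j<length fs. norm (fs!j) powr p) = 1"
    using assms unfolding Up_atom_def by blast
  show ?thesis
  proof (cases "card (Sset ts t) = 0")
    case True then show ?thesis unfolding H(3) step_fun_char[OF H(2)] by simp
  next
    case False
    define k where "k = card (Sset ts t) - 1"
    have k: "k < length fs" using Sset_card_le[of ts t] False H(1) k_def by linarith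
    have "norm (fs!k) powr p \<le> (\<Sum>j<length fs. norm (fs!j) powr p)"
      using k by (intro member_le_sum) auto
    then have "norm (fs!k) powr p \<le> 1" using H by simp
    have "norm (fs!k) \<le> 1"
    proof (rule ccontr)
      assume "\<not> norm (fs!k) \<le> 1"
      then have "1 powr p < norm (fs!k) powr p"
        by (intro powr_less_mono2) (use assms(2) in auto)
      with \<open>norm (fs!k) powr p \<le> 1\<close> show False by simp
    qed
    then show ?thesis unfolding H(3) step_fun_char[OF H(2)] using False k_def by simp
  qed
qed

lemma Sset_mono: "r \<le> t \<Longrightarrow> Sset xs r \<subseteq> Sset xs t"
  unfolding Sset_def by auto

lemma Sset_same:
  assumes rs: "sorted_wrt (<) rs" and sub: "set xs \<subseteq> set rs"
    and n: "card (Sset rs t) = n" "0 < n"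
  shows "Sset xs (rs!(n-1)) = Sset xs t"
proof -
  have S: "Sset rs t = {..<n}" using Sset_eq[OF rs, of t] unfolding n(1) .
  have nl: "n \<le> length rs" using Sset_card_le[of rs t] unfolding n(1) .
  have "n-1 \<in> Sset rs t" using S n(2) by simp
  then have rt: "rs!(n-1) \<le> t" unfolding Sset_def by simp
  show ?thesis
  proof
    show "Sset xs (rs!(n-1)) \<subseteq> Sset xs t" using Sset_mono[OF rt] .
    show "Sset xs t \<subseteq> Sset xs (rs!(n-1))"
    proof
      fix j assume j: "j \<in> Sset xs t"
      then have "xs!j \<in> set rs" using sub unfolding Sset_def by auto
      then obtain k where k: "k < length rs" "rs!k = xs!j" by (auto simp: in_set_conv_nth)
      then have "k \<in> Sset rs t" using j unfolding Sset_def by auto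
      then have "k \<le> n - 1" using S by auto
      then have "rs!k \<le> rs!(n-1)"
        using rs nl n(2) by (intro sorted_nth_mono) (auto simp: strict_sorted_imp_sorted)
      then show "j \<in> Sset xs (rs!(n-1))" using j k unfolding Sset_def by auto
    qed
  qed
qed

lemma step_prod:
  fixes Fs :: "('h::real_normed_vector \<Rightarrow>\<^sub>L 'h) list" and gs :: "'h list"
  assumes st: "sorted_wrt (<) ts" and ss: "sorted_wrt (<) ss"
    and lF: "length Fs = length ts" and lg: "length gs = length ss" and p: "p > 0"
  defines "rs \<equiv> sorted_list_of_set (set ts \<union> set ss)"
  defines "hs \<equiv> map (\<lambda>r. blinfun_apply (step_fun ts Fs r) (step_fun ss gs r)) rs"
  shows "sorted_wrt (<) rs" "length hs = length rs"
    "\<And>t. blinfun_apply (step_fun ts Fs t) (step_fun ss gs t) = step_fun rs hs t"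
    "(\<Sum>k<length hs. norm (hs!k) powr p) \<le>
       (\<Sum>i<length Fs. norm (Fs!i) powr p) * (\<Sum>j<length gs. norm (gs!j) powr p)"
proof -
  show rs: "sorted_wrt (<) rs" unfolding rs_def by simp
  show lh: "length hs = length rs" unfolding hs_def by simp
  have setrs: "set rs = set ts \<union> set ss" unfolding rs_def by simp
  show "blinfun_apply (step_fun ts Fs t) (step_fun ss gs t) = step_fun rs hs t" for t
  proof (cases "card (Sset rs t) = 0")
    case True
    then have E: "Sset rs t = {}" by simp
    have "Sset ts t = {}"
    proof (rule ccontr)
      assume "Sset ts t \<noteq> {}"
      then obtain j where j: "j \<in> Sset ts t" by blast
      then have "ts!j \<in> set rs" using setrs unfolding Sset_def by auto
      then obtain k where k: "k < length rs" "rs!k = ts!j" by (auto simp: in_set_conv_nth)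
      then have "k \<in> Sset rs t" using j unfolding Sset_def by auto
      with E show False by simp
    qed
    then have "step_fun ts Fs t = 0" by (simp add: step_fun_char[OF st])
    moreover have "step_fun rs hs t = 0" using True by (simp add: step_fun_char[OF rs])
    ultimately show ?thesis by simp
  next
    case False
    define n where "n = card (Sset rs t)"
    have n: "0 < n" using False n_def by (simp add: card_gt_0_iff)
    have nl: "n \<le> length rs" using Sset_card_le[of rs t] n_def by simp
    have e1: "Sset ts (rs!(n-1)) = Sset ts t"
      using Sset_same[OF rs, of ts t n] setrs n n_def by auto
    have e2: "Sset ss (rs!(n-1)) = Sset ss t"
      using Sset_same[OF rs, of ss t n] setrs n n_def by auto
    have "step_fun rs hs t = hs!(n-1)" unfolding step_fun_char[OF rs, of hs t] n_def[symmetric] using n by simp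
    also have "\<dots> = blinfun_apply (step_fun ts Fs (rs!(n-1))) (step_fun ss gs (rs!(n-1)))"
      unfolding hs_def using nl n by simp
    also have "\<dots> = blinfun_apply (step_fun ts Fs t) (step_fun ss gs t)"
      by (simp only: step_fun_char[OF st] step_fun_char[OF ss] e1 e2)
    finally show ?thesis by simp
  qed
  define I where "I k = card (Sset ts (rs!k))" for k
  define J where "J k = card (Sset ss (rs!k))" for k
  define \<phi>1 where "\<phi>1 i = (if i = 0 then 0 else norm (Fs!(i-1)) powr p)" for i
  define \<phi>2 where "\<phi>2 j = (if j = 0 then 0 else norm (gs!(j-1)) powr p)" for j
  define \<phi> where "\<phi> x = \<phi>1 (fst x) * \<phi>2 (snd x)" for x
  define f where "f k = (I k, J k)" for k
  have \<phi>nn: "0 \<le> \<phi> x" for x unfolding \<phi>_def \<phi>1_def \<phi>2_def by auto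
  have a1: "norm (step_fun ts Fs (rs!k)) powr p = \<phi>1 (I k)" for k
    unfolding \<phi>1_def I_def step_fun_char[OF st] by simp
  have a2: "norm (step_fun ss gs (rs!k)) powr p = \<phi>2 (J k)" for k
    unfolding \<phi>2_def J_def step_fun_char[OF ss] by simp
  have trm: "norm (hs!k) powr p \<le> \<phi> (f k)" if k: "k < length rs" for k
  proof -
    have "norm (hs!k) \<le> norm (step_fun ts Fs (rs!k)) * norm (step_fun ss gs (rs!k))"
      unfolding hs_def using k by (simp add: norm_blinfun)
    then have "norm (hs!k) powr p \<le> (norm (step_fun ts Fs (rs!k)) * norm (step_fun ss gs (rs!k))) powr p"
      using p by (intro powr_mono2) auto
    also have "\<dots> = \<phi> (f k)"
      by (simp add: powr_mult a1 a2 \<phi>_def f_def)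
    finally show ?thesis .
  qed
  have noninj: "f k \<noteq> f k'" if kk: "k < k'" "k' < length rs" for k k'
  proof
    assume eq: "f k = f k'"
    have lt: "rs!k < rs!k'" using rs kk by (simp add: sorted_wrt_iff_nth_less)
    have "Sset ts (rs!k) = Sset ts (rs!k')"
      by (rule card_subset_eq) (use Sset_mono[of "rs!k" "rs!k'" ts] lt eq in \<open>auto simp: f_def I_def\<close>)
    moreover have "Sset ss (rs!k) = Sset ss (rs!k')"
      by (rule card_subset_eq) (use Sset_mono[of "rs!k" "rs!k'" ss] lt eq in \<open>auto simp: f_def J_def\<close>)
    moreover have "rs!k' \<in> set ts \<union> set ss" using setrs kk by auto
    ultimately show False
    proof (elim UnE)
      assume A: "Sset ts (rs!k) = Sset ts (rs!k')" and "rs!k' \<in> set ts"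
      then obtain m where m: "m < length ts" "ts!m = rs!k'" by (auto simp: in_set_conv_nth)
      then have "m \<in> Sset ts (rs!k')" unfolding Sset_def by auto
      then have "ts!m \<le> rs!k" using A unfolding Sset_def by auto
      with m lt show False by simp
    next
      assume A: "Sset ss (rs!k) = Sset ss (rs!k')" and "rs!k' \<in> set ss"
      then obtain m where m: "m < length ss" "ss!m = rs!k'" by (auto simp: in_set_conv_nth)
      then have "m \<in> Sset ss (rs!k')" unfolding Sset_def by auto
      then have "ss!m \<le> rs!k" using A unfolding Sset_def by auto
      with m lt show False by simp
    qed
  qed
  have inj: "inj_on f {..<length rs}"
  proof (rule inj_onI)
    fix k k' assume "k \<in> {..<length rs}" "k' \<in> {..<length rs}" "f k = f k'"
    then show "k = k'" using noninj[of k k'] noninj[of k' k] by (metis lessThan_iff linorder_neqE_nat)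
  qed
  have "(\<Sum>k<length hs. norm (hs!k) powr p) \<le> (\<Sum>k<length rs. \<phi> (f k))"
    unfolding lh by (rule sum_mono) (simp add: trm)
  also have "\<dots> = (\<Sum>x\<in>f ` {..<length rs}. \<phi> x)"
    using sum.reindex[OF inj, of \<phi>] by simp
  also have "\<dots> \<le> (\<Sum>x\<in>{..length ts} \<times> {..length ss}. \<phi> x)"
  proof (rule sum_mono2)
    show "f ` {..<length rs} \<subseteq> {..length ts} \<times> {..length ss}"
      unfolding f_def I_def J_def using Sset_card_le by auto
  qed (use \<phi>nn in auto)
  also have "\<dots> = (\<Sum>i\<le>length ts. \<phi>1 i) * (\<Sum>j\<le>length ss. \<phi>2 j)"
    unfolding \<phi>_def by (simp add: sum_product sum.cartesian_product case_prod_beta')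
  also have "(\<Sum>i\<le>length ts. \<phi>1 i) * (\<Sum>j\<le>length ss. \<phi>2 j) = (\<Sum>i<length Fs. norm (Fs!i) powr p) * (\<Sum>j<length gs. norm (gs!j) powr p)"
  proof -
    have e1: "(\<Sum>i\<le>length ts. \<phi>1 i) = \<phi>1 0 + (\<Sum>i<length ts. \<phi>1 (Suc i))"
      by (rule sum.atMost_shift)
    have e2: "(\<Sum>i\<le>length ss. \<phi>2 i) = \<phi>2 0 + (\<Sum>i<length ss. \<phi>2 (Suc i))"
      by (rule sum.atMost_shift)
    have e3: "\<phi>1 0 = 0" "\<phi>2 0 = 0" "\<And>i. \<phi>1 (Suc i) = norm (Fs!i) powr p" "\<And>i. \<phi>2 (Suc i) = norm (gs!i) powr p"
      by (simp_all only: \<phi>1_def \<phi>2_def if_True if_False nat.distinct diff_Suc_1 refl)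
    show ?thesis by (simp only: e1 e2 e3 lF lg add_0_left)
  qed
  finally show "(\<Sum>k<length hs. norm (hs!k) powr p) \<le>
       (\<Sum>i<length Fs. norm (Fs!i) powr p) * (\<Sum>j<length gs. norm (gs!j) powr p)" .
qed



lemma normalize_step:
  fixes hs :: "'a::real_normed_vector list"
  assumes rs: "sorted_wrt (<) rs" and lh: "length hs = length rs" and p: "p > 0"
  shows "\<exists>w. ((\<Sum>k<length hs. norm (hs!k) powr p) \<noteq> 0 \<longrightarrow> Up_atom p w) \<and>
     (\<forall>t. step_fun rs hs t = ((\<Sum>k<length hs. norm (hs!k) powr p) powr (1/p)) *\<^sub>R w t)"
proof -
  define \<sigma> where "\<sigma> = (\<Sum>k<length hs. norm (hs!k) powr p)"
  have \<sigma>0: "0 \<le> \<sigma>" unfolding \<sigma>_def by (intro sum_nonneg) simp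
  show ?thesis
  proof (cases "\<sigma> = 0")
    case True
    then have "\<forall>k\<in>{..<length hs}. norm (hs!k) powr p = 0"
      unfolding \<sigma>_def by (subst (asm) sum_nonneg_eq_0_iff) auto
    then have "\<forall>x\<in>set hs. x = 0" by (auto simp: in_set_conv_nth)
    then have "step_fun rs hs t = 0" for t using step_fun_zero lh by blast
    then show ?thesis unfolding \<sigma>_def[symmetric] using True by (intro exI[of _ "\<lambda>t. 0"]) simp
  next
    case False
    then have \<sigma>p: "\<sigma> > 0" using \<sigma>0 by simp
    define c where "c = \<sigma> powr (-1/p)"
    have c0: "c > 0" unfolding c_def using \<sigma>p by simp
    define w where "w = step_fun rs (map (\<lambda>x. c *\<^sub>R x) hs)"
    have "rs \<noteq> []"
    proof
      assume "rs = []"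
      then have "hs = []" using lh by simp
      then show False using False unfolding \<sigma>_def by simp
    qed
    moreover have "(\<Sum>j<length (map (\<lambda>x. c *\<^sub>R x) hs). norm (map (\<lambda>x. c *\<^sub>R x) hs ! j) powr p) = 1"
    proof -
      have "(\<Sum>j<length (map (\<lambda>x. c *\<^sub>R x) hs). norm (map (\<lambda>x. c *\<^sub>R x) hs ! j) powr p)
          = (\<Sum>j<length hs. c powr p * norm (hs ! j) powr p)"
        using c0 by (intro sum.cong) (auto simp: powr_mult)
      also have "\<dots> = c powr p * \<sigma>" unfolding \<sigma>_def by (simp add: sum_distrib_left)
      also have "c powr p = \<sigma> powr (-1)" unfolding c_def powr_powr using p by simp
      also have "\<sigma> powr (-1) * \<sigma> = 1" using \<sigma>p by (simp add: powr_minus)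
      finally show ?thesis .
    qed
    ultimately have "Up_atom p w" unfolding Up_atom_def w_def using rs lh
      by (intro exI[of _ rs] exI[of _ "map (\<lambda>x. c *\<^sub>R x) hs"]) simp
    moreover have "step_fun rs hs t = (\<sigma> powr (1/p)) *\<^sub>R w t" for t
    proof -
      have "(\<sigma> powr (1/p)) * c = 1" unfolding c_def using \<sigma>p by (simp add: powr_add[symmetric])
      then show ?thesis unfolding w_def using step_fun_scale[OF lh] by simp
    qed
    ultimately show ?thesis unfolding \<sigma>_def[symmetric] by blast
  qed
qed

lemma atom_prod:
  fixes a :: "real \<Rightarrow> ('h::real_normed_vector \<Rightarrow>\<^sub>L 'h)" and b :: "real \<Rightarrow> 'h"
  assumes "Up_atom p a" "Up_atom p b" "p > 0"
  shows "\<exists>\<gamma> w. 0 \<le> \<gamma> \<and> \<gamma> \<le> 1 \<and> (\<gamma> \<noteq> 0 \<longrightarrow> Up_atom p w) \<and> (\<forall>t. blinfun_apply (a t) (b t) = \<gamma> *\<^sub>R w t)"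
proof -
  obtain ts Fs where A: "length Fs = length ts" "ts \<noteq> []" "sorted_wrt (<) ts" "a = step_fun ts Fs"
      "(\<Sum>j<length Fs. norm (Fs!j) powr p) = 1"
    using assms(1) unfolding Up_atom_def by blast
  obtain ss gs where B: "length gs = length ss" "ss \<noteq> []" "sorted_wrt (<) ss" "b = step_fun ss gs"
      "(\<Sum>j<length gs. norm (gs!j) powr p) = 1"
    using assms(2) unfolding Up_atom_def by blast
  define rs where "rs = sorted_list_of_set (set ts \<union> set ss)"
  define hs where "hs = map (\<lambda>r. blinfun_apply (step_fun ts Fs r) (step_fun ss gs r)) rs"
  note SP = step_prod[OF A(3) B(3) A(1) B(1) assms(3), folded rs_def, folded hs_def]
  define \<sigma> where "\<sigma> = (\<Sum>k<length hs. norm (hs!k) powr p)"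
  have \<sigma>0: "0 \<le> \<sigma>" unfolding \<sigma>_def by (intro sum_nonneg) simp
  have \<sigma>1: "\<sigma> \<le> 1" using SP(4) A(5) B(5) unfolding \<sigma>_def by simp
  obtain w where w: "\<sigma> \<noteq> 0 \<longrightarrow> Up_atom p w" "\<forall>t. step_fun rs hs t = (\<sigma> powr (1/p)) *\<^sub>R w t"
    using normalize_step[OF SP(1) SP(2) assms(3)] unfolding \<sigma>_def[symmetric] by blast
  show ?thesis
  proof (intro exI conjI)
    show "0 \<le> \<sigma> powr (1/p)" by simp
    show "\<sigma> powr (1/p) \<le> 1" using \<sigma>0 \<sigma>1 assms(3) by (intro powr_le1) auto
    show "\<sigma> powr (1/p) \<noteq> 0 \<longrightarrow> Up_atom p w" using w(1) by simp
    show "\<forall>t. blinfun_apply (a t) (b t) = (\<sigma> powr (1/p)) *\<^sub>R w t"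
      using SP(3) w(2) A(4) B(4) by simp
  qed
qed

lemma atom_lin:
  fixes L :: "'h::real_normed_vector \<Rightarrow>\<^sub>L 'h" and b :: "real \<Rightarrow> 'h"
  assumes "Up_atom p b" "p > 0"
  shows "\<exists>\<gamma> w. 0 \<le> \<gamma> \<and> \<gamma> \<le> norm L \<and> (\<gamma> \<noteq> 0 \<longrightarrow> Up_atom p w) \<and> (\<forall>t. blinfun_apply L (b t) = \<gamma> *\<^sub>R w t)"
proof -
  obtain ss gs where B: "length gs = length ss" "ss \<noteq> []" "sorted_wrt (<) ss" "b = step_fun ss gs"
      "(\<Sum>j<length gs. norm (gs!j) powr p) = 1"
    using assms(1) unfolding Up_atom_def by blast
  define hs where "hs = map (blinfun_apply L) gs"
  have lh: "length hs = length ss" unfolding hs_def using B(1) by simp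
  define \<sigma> where "\<sigma> = (\<Sum>k<length hs. norm (hs!k) powr p)"
  have \<sigma>0: "0 \<le> \<sigma>" unfolding \<sigma>_def by (intro sum_nonneg) simp
  have "\<sigma> \<le> (\<Sum>k<length gs. norm L powr p * norm (gs!k) powr p)"
    unfolding \<sigma>_def hs_def length_map
  proof (rule sum_mono)
    fix k assume k: "k \<in> {..<length gs}"
    have "norm (map (blinfun_apply L) gs ! k) \<le> norm L * norm (gs!k)"
      using k by (simp add: norm_blinfun)
    then have "norm (map (blinfun_apply L) gs ! k) powr p \<le> (norm L * norm (gs!k)) powr p"
      using assms(2) by (intro powr_mono2) auto
    then show "norm (map (blinfun_apply L) gs ! k) powr p \<le> norm L powr p * norm (gs!k) powr p"
      by (simp add: powr_mult)
  qed
  also have "\<dots> = norm L powr p" using B(5) by (simp add: sum_distrib_left[symmetric])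
  finally have \<sigma>1: "\<sigma> \<le> norm L powr p" .
  obtain w where w: "\<sigma> \<noteq> 0 \<longrightarrow> Up_atom p w" "\<forall>t. step_fun ss hs t = (\<sigma> powr (1/p)) *\<^sub>R w t"
    using normalize_step[OF B(3) lh assms(2)] unfolding \<sigma>_def[symmetric] by blast
  show ?thesis
  proof (intro exI conjI)
    show "0 \<le> \<sigma> powr (1/p)" by simp
    have "\<sigma> powr (1/p) \<le> (norm L powr p) powr (1/p)"
      using \<sigma>0 \<sigma>1 assms(2) by (intro powr_mono2) auto
    also have "\<dots> = norm L" using assms(2) by (simp add: powr_powr)
    finally show "\<sigma> powr (1/p) \<le> norm L" .
    show "\<sigma> powr (1/p) \<noteq> 0 \<longrightarrow> Up_atom p w" using w(1) by simp
    show "\<forall>t. blinfun_apply L (b t) = (\<sigma> powr (1/p)) *\<^sub>R w t"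
      using w(2) step_fun_lin[OF B(1), of L] B(4) unfolding hs_def by simp
  qed
qed



lemma abs_summable_summable_cs:
  fixes f :: \<open>'a \<Rightarrow> 'b :: {real_normed_vector, complete_space}\<close>
  assumes \<open>f abs_summable_on A\<close>
  shows \<open>f summable_on A\<close>
proof -
  from assms obtain L where lim: \<open>(sum (\<lambda>x. norm (f x)) \<longlongrightarrow> L) (finite_subsets_at_top A)\<close>
    unfolding has_sum_def summable_on_def by blast
  have \<open>\<exists>P. eventually P (finite_subsets_at_top A) \<and>
              (\<forall>F F'. P F \<and> P F' \<longrightarrow> dist (sum f F) (sum f F') < e)\<close> if \<open>e>0\<close> for e
  proof -
    define d P where \<open>d = e/4\<close> and \<open>P F \<longleftrightarrow> finite F \<and> F \<subseteq> A \<and> dist (sum (\<lambda>x. norm (f x)) F) L < d\<close> for F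
    then have \<open>d > 0\<close>
      by (simp add: d_def that)
    have ev_P: \<open>eventually P (finite_subsets_at_top A)\<close>
      using lim
      by (auto simp add: P_def[abs_def] \<open>0 < d\<close> eventually_conj_iff eventually_finite_subsets_at_top_weakI tendsto_iff)
    moreover have \<open>dist (sum f F1) (sum f F2) < e\<close> if \<open>P F1\<close> and \<open>P F2\<close> for F1 F2
    proof -
      from ev_P
      obtain F' where \<open>finite F'\<close> and \<open>F' \<subseteq> A\<close> and P_sup_F': \<open>finite F \<and> F \<supseteq> F' \<and> F \<subseteq> A \<Longrightarrow> P F\<close> for F
        by atomize_elim (simp add: eventually_finite_subsets_at_top)
      define F where \<open>F = F' \<union> F1 \<union> F2\<close>
      have \<open>finite F\<close> and \<open>F \<subseteq> A\<close>
        using F_def P_def[abs_def] that \<open>finite F'\<close> \<open>F' \<subseteq> A\<close> by auto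
      have dist_F: \<open>dist (sum (\<lambda>x. norm (f x)) F) L < d\<close>
        by (metis F_def \<open>F \<subseteq> A\<close> P_def P_sup_F' \<open>finite F\<close> le_supE order_refl)
      have dist_F_subset: \<open>dist (sum f F) (sum f F') < 2*d\<close> if F': \<open>F' \<subseteq> F\<close> \<open>P F'\<close> for F'
      proof -
        have \<open>dist (sum f F) (sum f F') = norm (sum f (F-F'))\<close>
          unfolding dist_norm using \<open>finite F\<close> F' by (subst sum_diff) auto
        also have \<open>\<dots> \<le> norm (\<Sum>x\<in>F-F'. norm (f x))\<close>
          by (rule order.trans[OF sum_norm_le[OF order.refl]]) auto
        also have \<open>\<dots> = dist (\<Sum>x\<in>F. norm (f x)) (\<Sum>x\<in>F'. norm (f x))\<close>
          unfolding dist_norm using \<open>finite F\<close> F' by (subst sum_diff) auto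
        also have \<open>\<dots> < 2 * d\<close>
          using dist_F F' unfolding P_def dist_norm real_norm_def by linarith
        finally show \<open>dist (sum f F) (sum f F') < 2*d\<close> .
      qed
      have \<open>dist (sum f F1) (sum f F2) \<le> dist (sum f F) (sum f F1) + dist (sum f F) (sum f F2)\<close>
        by (rule dist_triangle3)
      also have \<open>\<dots> < 2 * d + 2 * d\<close>
        by (intro add_strict_mono dist_F_subset that) (auto simp: F_def)
      also have \<open>\<dots> \<le> e\<close>
        by (auto simp: d_def)
      finally show \<open>dist (sum f F1) (sum f F2) < e\<close> .
    qed
    ultimately show ?thesis
      by blast
  qed
  then have \<open>cauchy_filter (filtermap (sum f) (finite_subsets_at_top A))\<close>
    by (simp add: cauchy_filter_metric_filtermap)
  moreover have "complete (UNIV::'b set)"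
    by (meson Cauchy_convergent UNIV_I complete_def convergent_def)
  ultimately obtain L' where \<open>(sum f \<longlongrightarrow> L') (finite_subsets_at_top A)\<close>
    using complete_uniform[where S=UNIV] by (force simp add: filterlim_def)
  then show ?thesis
    using summable_on_def has_sum_def by blast
qed

lemma normsum_has_sum:
  fixes f :: "nat \<Rightarrow> 'b :: {real_normed_vector, complete_space}"
  assumes "summable (\<lambda>n. norm (f n))" "f sums S"
  shows "(f has_sum S) UNIV"
proof -
  have "((\<lambda>n. norm (f n)) has_sum (\<Sum>n. norm (f n))) UNIV"
    using assms(1) by (intro sums_nonneg_imp_has_sum) (auto simp: summable_sums)
  then have "f abs_summable_on UNIV" by (auto simp: summable_on_def)
  then have "f summable_on UNIV" by (rule abs_summable_summable_cs)
  then have "(f has_sum infsum f UNIV) UNIV" by (simp add: summable_iff_has_sum_infsum)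
  moreover then have "infsum f UNIV = S" using has_sum_imp_sums assms(2) sums_unique2 by blast
  ultimately show ?thesis by simp
qed



lemma plus_unif: "uniformly_continuous_on UNIV (\<lambda>(x::'a::real_normed_vector, y). x + y)"
  unfolding uniformly_continuous_on_def
proof (intro allI impI)
  fix e :: real assume e: "e > 0"
  show "\<exists>d>0. \<forall>x\<in>UNIV. \<forall>x'\<in>UNIV. dist x' x < d \<longrightarrow> dist ((\<lambda>(x, y). x + y) x') ((\<lambda>(x::'a, y). x + y) x) < e"
  proof (intro exI[of _ "e/2"] conjI ballI impI)
    show "e/2 > 0" using e by simp
    fix x x' :: "'a \<times> 'a" assume d: "dist x' x < e/2"
    have "dist ((\<lambda>(x, y). x + y) x') ((\<lambda>(x::'a, y). x + y) x) = dist (fst x' + snd x') (fst x + snd x)"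
      by (simp add: case_prod_beta)
    also have "\<dots> \<le> dist (fst x') (fst x) + dist (snd x') (snd x)"
      by (simp add: dist_norm norm_diff_triangle_ineq)
    also have "\<dots> \<le> dist x' x + dist x' x" by (intro add_mono dist_fst_le dist_snd_le)
    also have "\<dots> < e" using d by simp
    finally show "dist ((\<lambda>(x, y). x + y) x') ((\<lambda>(x::'a, y). x + y) x) < e" .
  qed
qed

lemma partial_bound:
  fixes c d :: "nat \<Rightarrow> real"
  assumes sc: "summable (\<lambda>j. \<bar>c j\<bar>)" and sd: "summable (\<lambda>j. \<bar>d j\<bar>)"
  shows "(\<Sum>n<N. \<bar>c (fst (prod_decode n))\<bar> * \<bar>d (snd (prod_decode n))\<bar>) \<le> (\<Sum>j. \<bar>c j\<bar>) * (\<Sum>j. \<bar>d j\<bar>)"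
proof -
  define X where "X = prod_decode ` {..<N}"
  define bnd where "bnd x = \<bar>c (fst x)\<bar> * \<bar>d (snd x)\<bar>" for x
  have fX: "finite X" unfolding X_def by simp
  have "(\<Sum>n<N. bnd (prod_decode n)) = (\<Sum>x\<in>X. bnd x)"
    unfolding X_def by (rule sum.reindex[OF inj_prod_decode, symmetric, unfolded comp_def])
  also have "\<dots> \<le> (\<Sum>x\<in>fst ` X \<times> snd ` X. bnd x)"
  proof (rule sum_mono2)
    show "X \<subseteq> fst ` X \<times> snd ` X" by force
  qed (use fX in \<open>auto simp: bnd_def\<close>)
  also have "\<dots> = (\<Sum>i\<in>fst ` X. \<bar>c i\<bar>) * (\<Sum>j\<in>snd ` X. \<bar>d j\<bar>)"
    unfolding bnd_def by (simp add: sum_product sum.cartesian_product case_prod_beta')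
  also have "\<dots> \<le> (\<Sum>j. \<bar>c j\<bar>) * (\<Sum>j. \<bar>d j\<bar>)"
    by (intro mult_mono sum_le_suminf sc sd suminf_nonneg) (use fX in auto)
  finally show ?thesis unfolding bnd_def .
qed

lemma Up_mult:
  fixes A :: "real \<Rightarrow> ('h::{real_normed_vector,complete_space} \<Rightarrow>\<^sub>L 'h)" and w :: "real \<Rightarrow> 'h"
  assumes p: "p > 0" and RA: "Up_repr p A c a" and Rw: "Up_repr p w d b"
  shows "\<exists>e W. Up_repr p (\<lambda>t. blinfun_apply (A t) (w t)) e W \<and> (\<Sum>j. \<bar>e j\<bar>) \<le> (\<Sum>j. \<bar>c j\<bar>) * (\<Sum>j. \<bar>d j\<bar>)"
proof -
  have sc: "summable (\<lambda>j. \<bar>c j\<bar>)" and atA: "\<And>j. c j \<noteq> 0 \<Longrightarrow> Up_atom p (a j)"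
    and sA: "\<And>t. (\<lambda>j. c j *\<^sub>R a j t) sums A t"
    using RA unfolding Up_repr_def by auto
  have sd: "summable (\<lambda>j. \<bar>d j\<bar>)" and atw: "\<And>j. d j \<noteq> 0 \<Longrightarrow> Up_atom p (b j)"
    and sw: "\<And>t. (\<lambda>j. d j *\<^sub>R b j t) sums w t"
    using Rw unfolding Up_repr_def by auto
  have "\<exists>gw. c (fst x) \<noteq> 0 \<and> d (snd x) \<noteq> 0 \<longrightarrow> (0 \<le> fst gw \<and> fst gw \<le> 1 \<and> (fst gw \<noteq> 0 \<longrightarrow> Up_atom p (snd gw))
     \<and> (\<forall>t. blinfun_apply (a (fst x) t) (b (snd x) t) = fst gw *\<^sub>R snd gw t))" for x
  proof (cases "c (fst x) \<noteq> 0 \<and> d (snd x) \<noteq> 0")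
    case True
    then obtain g W where "0 \<le> g \<and> g \<le> 1 \<and> (g \<noteq> 0 \<longrightarrow> Up_atom p W) \<and> (\<forall>t. blinfun_apply (a (fst x) t) (b (snd x) t) = g *\<^sub>R W t)"
      using atom_prod[OF atA atw p] by blast
    then show ?thesis by (intro exI[of _ "(g, W)"]) simp
  qed blast
  then obtain GW where GW: "\<And>x. c (fst x) \<noteq> 0 \<and> d (snd x) \<noteq> 0 \<Longrightarrow> (0 \<le> fst (GW x) \<and> fst (GW x) \<le> 1 \<and> (fst (GW x) \<noteq> 0 \<longrightarrow> Up_atom p (snd (GW x)))
     \<and> (\<forall>t. blinfun_apply (a (fst x) t) (b (snd x) t) = fst (GW x) *\<^sub>R snd (GW x) t))"
    by metis
  define \<gamma> where "\<gamma> x = (if c (fst x) \<noteq> 0 \<and> d (snd x) \<noteq> 0 then fst (GW x) else 0)" for x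
  define e where "e n = c (fst (prod_decode n)) * d (snd (prod_decode n)) * \<gamma> (prod_decode n)" for n
  define W where "W n = snd (GW (prod_decode n))" for n
  define bnd where "bnd x = \<bar>c (fst x)\<bar> * \<bar>d (snd x)\<bar>" for x
  have bnn: "0 \<le> bnd x" for x unfolding bnd_def by simp
  have ebnd: "\<bar>e n\<bar> \<le> bnd (prod_decode n)" for n
  proof (cases "c (fst (prod_decode n)) \<noteq> 0 \<and> d (snd (prod_decode n)) \<noteq> 0")
    case True
    then have g: "0 \<le> \<gamma> (prod_decode n)" "\<gamma> (prod_decode n) \<le> 1" using GW[OF True] unfolding \<gamma>_def by auto
    have "\<bar>e n\<bar> = bnd (prod_decode n) * \<gamma> (prod_decode n)"
      unfolding e_def bnd_def using g by (simp add: abs_mult)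
    also have "\<dots> \<le> bnd (prod_decode n)" using g bnn by (simp add: mult_left_le)
    finally show ?thesis .
  next
    case False then show ?thesis unfolding e_def \<gamma>_def using bnn by auto
  qed
  have sb: "summable (\<lambda>n. bnd (prod_decode n))"
    by (rule summableI_nonneg_bounded[where x="(\<Sum>j. \<bar>c j\<bar>) * (\<Sum>j. \<bar>d j\<bar>)"])
       (use bnn partial_bound[OF sc sd] in \<open>auto simp: bnd_def\<close>)
  have se: "summable (\<lambda>n. \<bar>e n\<bar>)"
    by (rule summable_comparison_test'[OF sb]) (use ebnd in simp)
  have "(\<Sum>n. \<bar>e n\<bar>) \<le> (\<Sum>n. bnd (prod_decode n))"
    by (rule suminf_le[OF ebnd se sb])
  also have "\<dots> \<le> (\<Sum>j. \<bar>c j\<bar>) * (\<Sum>j. \<bar>d j\<bar>)"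
    by (rule suminf_le_const[OF sb]) (use partial_bound[OF sc sd] in \<open>simp add: bnd_def\<close>)
  finally have ebound: "(\<Sum>n. \<bar>e n\<bar>) \<le> (\<Sum>j. \<bar>c j\<bar>) * (\<Sum>j. \<bar>d j\<bar>)" .
  have eat: "Up_atom p (W n)" if "e n \<noteq> 0" for n
  proof -
    have C: "c (fst (prod_decode n)) \<noteq> 0 \<and> d (snd (prod_decode n)) \<noteq> 0" using that unfolding e_def by auto
    then have "fst (GW (prod_decode n)) \<noteq> 0" using that unfolding e_def \<gamma>_def by auto
    then show ?thesis using GW[OF C] unfolding W_def by blast
  qed
  have esum: "(\<lambda>n. e n *\<^sub>R W n t) sums blinfun_apply (A t) (w t)" for t
  proof -
    define g where "g x = blinfun_apply (c (fst x) *\<^sub>R a (fst x) t) (d (snd x) *\<^sub>R b (snd x) t)" for x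
    have eg: "e n *\<^sub>R W n t = g (prod_decode n)" for n
    proof (cases "c (fst (prod_decode n)) \<noteq> 0 \<and> d (snd (prod_decode n)) \<noteq> 0")
      case True
      have "g (prod_decode n) = (c (fst (prod_decode n)) * d (snd (prod_decode n))) *\<^sub>R
              blinfun_apply (a (fst (prod_decode n)) t) (b (snd (prod_decode n)) t)"
        unfolding g_def by (simp add: blinfun.scaleR_left blinfun.scaleR_right)
      also have "\<dots> = e n *\<^sub>R W n t"
        using GW[OF True] True unfolding e_def W_def \<gamma>_def by simp
      finally show ?thesis by simp
    next
      case False then show ?thesis unfolding e_def g_def \<gamma>_def by auto
    qed
    have anorm: "norm (c j *\<^sub>R a j t) \<le> \<bar>c j\<bar>" for j
      using atom_norm_le[OF atA p, of j t] by (cases "c j = 0") (auto simp: mult_left_le)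
    have bnorm: "norm (d j *\<^sub>R b j t) \<le> \<bar>d j\<bar>" for j
      using atom_norm_le[OF atw p, of j t] by (cases "d j = 0") (auto simp: mult_left_le)
    have gn: "norm (g x) \<le> bnd x" for x
    proof -
      have "norm (g x) \<le> norm (c (fst x) *\<^sub>R a (fst x) t) * norm (d (snd x) *\<^sub>R b (snd x) t)"
        unfolding g_def by (rule norm_blinfun)
      also have "\<dots> \<le> bnd x" unfolding bnd_def
        by (intro mult_mono anorm bnorm) auto
      finally show ?thesis .
    qed
    have "((\<lambda>n. bnd (prod_decode n)) has_sum (\<Sum>n. bnd (prod_decode n))) UNIV"
      using sb bnn by (intro sums_nonneg_imp_has_sum) (auto simp: summable_sums)
    then have "(bnd has_sum (\<Sum>n. bnd (prod_decode n))) UNIV"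
      using has_sum_reindex_bij_betw[OF bij_prod_decode] by blast
    then have "(\<lambda>x. norm (bnd x)) summable_on UNIV" using bnn by (auto simp: summable_on_def)
    then have "(\<lambda>x. norm (g x)) summable_on UNIV"
      by (rule Infinite_Sum.abs_summable_on_comparison_test) (use gn bnn in \<open>simp add: abs_of_nonneg\<close>)
    then have "g summable_on UNIV" by (rule abs_summable_summable_cs)
    then have gS: "(g has_sum infsum g UNIV) (Sigma UNIV (\<lambda>_. UNIV))"
      by (simp add: summable_iff_has_sum_infsum)
    have rows: "((\<lambda>j. g (i, j)) has_sum blinfun_apply (c i *\<^sub>R a i t) (w t)) UNIV" for i
    proof -
      have "summable (\<lambda>j. norm (d j *\<^sub>R b j t))"
        by (rule summable_comparison_test'[OF sd]) (use bnorm in simp)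
      then have "((\<lambda>j. d j *\<^sub>R b j t) has_sum w t) UNIV" by (rule normsum_has_sum[OF _ sw])
      then show ?thesis unfolding g_def fst_conv snd_conv
        by (rule has_sum_bounded_linear[OF blinfun.bounded_linear_right])
    qed
    have "((\<lambda>i. blinfun_apply (c i *\<^sub>R a i t) (w t)) has_sum infsum g UNIV) UNIV"
      by (rule has_sum_Sigma[OF plus_unif gS]) (use rows in simp)
    moreover have "((\<lambda>i. blinfun_apply (c i *\<^sub>R a i t) (w t)) has_sum blinfun_apply (A t) (w t)) UNIV"
    proof -
      have "summable (\<lambda>i. norm (blinfun_apply (c i *\<^sub>R a i t) (w t)))"
      proof (rule summable_comparison_test'[where g="\<lambda>i. \<bar>c i\<bar> * norm (w t)"])
        show "summable (\<lambda>i. \<bar>c i\<bar> * norm (w t))" using sc by (rule summable_mult2)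
        fix i :: nat
        have "norm (blinfun_apply (c i *\<^sub>R a i t) (w t)) \<le> norm (c i *\<^sub>R a i t) * norm (w t)"
          by (rule norm_blinfun)
        also have "\<dots> \<le> \<bar>c i\<bar> * norm (w t)" by (intro mult_right_mono anorm) auto
        finally show "norm (norm (blinfun_apply (c i *\<^sub>R a i t) (w t))) \<le> \<bar>c i\<bar> * norm (w t)" by simp
      qed
      moreover have "(\<lambda>i. blinfun_apply (c i *\<^sub>R a i t) (w t)) sums blinfun_apply (A t) (w t)"
        using bounded_linear.sums[OF blinfun.bounded_linear_left sA] .
      ultimately show ?thesis by (rule normsum_has_sum)
    qed
    ultimately have "infsum g UNIV = blinfun_apply (A t) (w t)" by (rule has_sum_unique)
    with gS have "(g has_sum blinfun_apply (A t) (w t)) UNIV" by simp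
    then have "((\<lambda>n. g (prod_decode n)) has_sum blinfun_apply (A t) (w t)) UNIV"
      using has_sum_reindex_bij_betw[OF bij_prod_decode] by blast
    then have "(\<lambda>n. g (prod_decode n)) sums blinfun_apply (A t) (w t)" by (rule has_sum_imp_sums)
    then show ?thesis unfolding eg[symmetric] .
  qed
  have "Up_repr p (\<lambda>t. blinfun_apply (A t) (w t)) e W"
    unfolding Up_repr_def using se eat esum by blast
  with ebound show ?thesis by blast
qed



lemma Up_lin:
  fixes L :: "'h::real_normed_vector \<Rightarrow>\<^sub>L 'h" and u :: "real \<Rightarrow> 'h"
  assumes p: "p > 0" and Ru: "in_Up p u"
  shows "in_Up p (\<lambda>t. blinfun_apply L (u t))"
proof -
  obtain d b where Rw: "Up_repr p u d b" using Ru unfolding in_Up_def by blast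
  have sd: "summable (\<lambda>j. \<bar>d j\<bar>)" and atw: "\<And>j. d j \<noteq> 0 \<Longrightarrow> Up_atom p (b j)"
    and sw: "\<And>t. (\<lambda>j. d j *\<^sub>R b j t) sums u t"
    using Rw unfolding Up_repr_def by auto
  have "\<exists>gw. d j \<noteq> 0 \<longrightarrow> (0 \<le> fst gw \<and> fst gw \<le> norm L \<and> (fst gw \<noteq> 0 \<longrightarrow> Up_atom p (snd gw))
     \<and> (\<forall>t. blinfun_apply L (b j t) = fst gw *\<^sub>R snd gw t))" for j
  proof (cases "d j \<noteq> 0")
    case True
    then obtain g W where "0 \<le> g \<and> g \<le> norm L \<and> (g \<noteq> 0 \<longrightarrow> Up_atom p W) \<and> (\<forall>t. blinfun_apply L (b j t) = g *\<^sub>R W t)"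
      using atom_lin[OF atw p] by blast
    then show ?thesis by (intro exI[of _ "(g, W)"]) simp
  qed blast
  then obtain GW where GW: "\<And>j. d j \<noteq> 0 \<Longrightarrow> (0 \<le> fst (GW j) \<and> fst (GW j) \<le> norm L \<and> (fst (GW j) \<noteq> 0 \<longrightarrow> Up_atom p (snd (GW j)))
     \<and> (\<forall>t. blinfun_apply L (b j t) = fst (GW j) *\<^sub>R snd (GW j) t))"
    by metis
  define e where "e j = (if d j \<noteq> 0 then d j * fst (GW j) else 0)" for j
  define W where "W j = snd (GW j)" for j
  have eb: "\<bar>e j\<bar> \<le> \<bar>d j\<bar> * norm L" for j
    using GW[of j] unfolding e_def by (auto simp: abs_mult intro: mult_left_mono)
  have se: "summable (\<lambda>j. \<bar>e j\<bar>)"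
    by (rule summable_comparison_test'[OF summable_mult2[OF sd, of "norm L"]]) (use eb in simp)
  have eat: "Up_atom p (W j)" if "e j \<noteq> 0" for j
  proof -
    have C: "d j \<noteq> 0" "fst (GW j) \<noteq> 0" using that unfolding e_def by (auto split: if_splits)
    then show ?thesis using GW[OF C(1)] unfolding W_def by blast
  qed
  have esum: "(\<lambda>j. e j *\<^sub>R W j t) sums blinfun_apply L (u t)" for t
  proof -
    have "(\<lambda>j. blinfun_apply L (d j *\<^sub>R b j t)) sums blinfun_apply L (u t)"
      by (rule bounded_linear.sums[OF blinfun.bounded_linear_right sw])
    moreover have "blinfun_apply L (d j *\<^sub>R b j t) = e j *\<^sub>R W j t" for j
    proof (cases "d j \<noteq> 0")
      case True then show ?thesis using GW[OF True] unfolding e_def W_def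
        by (simp add: blinfun.scaleR_right)
    qed (simp add: e_def)
    ultimately show ?thesis by simp
  qed
  have "Up_repr p (\<lambda>t. blinfun_apply L (u t)) e W"
    unfolding Up_repr_def using se eat esum by blast
  then show ?thesis unfolding in_Up_def by blast
qed

lemma inf_mult:
  fixes X :: real and S R :: "real set"
  assumes "S \<noteq> {}" "R \<noteq> {}" "\<And>s. s \<in> S \<Longrightarrow> 0 \<le> s" "\<And>r. r \<in> R \<Longrightarrow> 0 \<le> r"
    and H: "\<And>s r. s \<in> S \<Longrightarrow> r \<in> R \<Longrightarrow> X \<le> s * r"
  shows "X \<le> Inf S * Inf R"
proof -
  have IS: "0 \<le> Inf S" using assms(1,3) by (intro cInf_greatest) auto
  have IR: "0 \<le> Inf R" using assms(2,4) by (intro cInf_greatest) auto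
  obtain s0 where s0: "s0 \<in> S" using assms(1) by blast
  obtain r0 where r0: "r0 \<in> R" using assms(2) by blast
  have step: "X \<le> Inf S * r" if r: "r \<in> R" for r
  proof (cases "r = 0")
    case True then show ?thesis using H[OF s0 r] by simp
  next
    case False
    then have rp: "r > 0" using assms(4)[OF r] by simp
    have "X / r \<le> Inf S"
      using assms(1) by (intro cInf_greatest) (use H[OF _ r] rp in \<open>auto simp: pos_divide_le_eq\<close>)
    then show ?thesis using rp by (simp add: pos_divide_le_eq)
  qed
  show ?thesis
  proof (cases "Inf S = 0")
    case True then show ?thesis using step[OF r0] by simp
  next
    case False
    then have sp: "Inf S > 0" using IS by simp
    have "X / Inf S \<le> Inf R"
      using assms(2) by (intro cInf_greatest) (use step sp in \<open>auto simp: pos_divide_le_eq mult.commute\<close>)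
    then show ?thesis using sp by (simp add: pos_divide_le_eq mult.commute)
  qed
qed

lemma Up_norm_nonneg:
  assumes "in_Up p u"
  shows "0 \<le> Up_norm p u"
  unfolding Up_norm_def
proof (rule cInf_greatest)
  show "{s. \<exists>c a. Up_repr p u c a \<and> s = (\<Sum>j. \<bar>c j\<bar>)} \<noteq> {}" using assms unfolding in_Up_def by blast
  fix s assume "s \<in> {s. \<exists>c a. Up_repr p u c a \<and> s = (\<Sum>j. \<bar>c j\<bar>)}"
  then show "0 \<le> s" unfolding Up_repr_def by (auto intro: suminf_nonneg)
qed

lemma Up_main:
  fixes A :: "real \<Rightarrow> ('h::{real_normed_vector,complete_space} \<Rightarrow>\<^sub>L 'h)" and w :: "real \<Rightarrow> 'h"
  assumes p: "p > 0" and A: "in_Up p A" and w: "in_Up p w"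
  shows "in_Up p (\<lambda>t. blinfun_apply (A t) (w t)) \<and>
    Up_norm p (\<lambda>t. blinfun_apply (A t) (w t)) \<le> Up_norm p A * Up_norm p w"
proof
  obtain c a where RA: "Up_repr p A c a" using A unfolding in_Up_def by blast
  obtain d b where Rw: "Up_repr p w d b" using w unfolding in_Up_def by blast
  show "in_Up p (\<lambda>t. blinfun_apply (A t) (w t))"
    using Up_mult[OF p RA Rw] unfolding in_Up_def by blast
  define SA where "SA = {s. \<exists>c a. Up_repr p A c a \<and> s = (\<Sum>j. \<bar>c j\<bar>)}"
  define Sw where "Sw = {s. \<exists>c a. Up_repr p w c a \<and> s = (\<Sum>j. \<bar>c j\<bar>)}"
  have "Up_norm p (\<lambda>t. blinfun_apply (A t) (w t)) \<le> Inf SA * Inf Sw"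
  proof (rule inf_mult)
    show "SA \<noteq> {}" using A unfolding SA_def in_Up_def by blast
    show "Sw \<noteq> {}" using w unfolding Sw_def in_Up_def by blast
    show "0 \<le> s" if "s \<in> SA" for s using that unfolding SA_def Up_repr_def by (auto intro: suminf_nonneg)
    show "0 \<le> s" if "s \<in> Sw" for s using that unfolding Sw_def Up_repr_def by (auto intro: suminf_nonneg)
    fix s r assume s: "s \<in> SA" and r: "r \<in> Sw"
    obtain c a where c: "Up_repr p A c a" "s = (\<Sum>j. \<bar>c j\<bar>)" using s unfolding SA_def by blast
    obtain d b where d: "Up_repr p w d b" "r = (\<Sum>j. \<bar>d j\<bar>)" using r unfolding Sw_def by blast
    obtain e W where e: "Up_repr p (\<lambda>t. blinfun_apply (A t) (w t)) e W" "(\<Sum>j. \<bar>e j\<bar>) \<le> s * r"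
      using Up_mult[OF p c(1) d(1)] c(2) d(2) by blast
    have "Up_norm p (\<lambda>t. blinfun_apply (A t) (w t)) \<le> (\<Sum>j. \<bar>e j\<bar>)"
      unfolding Up_norm_def
    proof (rule cInf_lower)
      show "(\<Sum>j. \<bar>e j\<bar>) \<in> {s. \<exists>c a. Up_repr p (\<lambda>t. blinfun_apply (A t) (w t)) c a \<and> s = (\<Sum>j. \<bar>c j\<bar>)}"
        using e(1) by blast
      show "bdd_below {s. \<exists>c a. Up_repr p (\<lambda>t. blinfun_apply (A t) (w t)) c a \<and> s = (\<Sum>j. \<bar>c j\<bar>)}"
        by (rule bdd_belowI[of _ 0]) (auto simp: Up_repr_def intro: suminf_nonneg)
    qed
    with e(2) show "Up_norm p (\<lambda>t. blinfun_apply (A t) (w t)) \<le> s * r" by linarith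
  qed
  then show "Up_norm p (\<lambda>t. blinfun_apply (A t) (w t)) \<le> Up_norm p A * Up_norm p w"
    unfolding Up_norm_def SA_def Sw_def .
qed



lemma powr_conv:
  fixes x y l p :: real
  assumes p: "1 \<le> p" and xy: "0 \<le> x" "0 \<le> y" and l: "0 \<le> l" "l \<le> 1"
  shows "(l * x + (1 - l) * y) powr p \<le> l * x powr p + (1 - l) * y powr p"
proof -
  have small: "c powr p \<le> c" if "0 \<le> c" "c \<le> 1" for c :: real
  proof (cases "c = 0")
    case False
    have "c powr p \<le> c powr 1" by (rule powr_mono') (use that p in auto)
    then show ?thesis using that by simp
  qed simp
  show ?thesis
  proof (cases "x = 0")
    case True
    have "((1 - l) * y) powr p = (1 - l) powr p * y powr p" using l xy by (simp add: powr_mult)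
    also have "\<dots> \<le> (1 - l) * y powr p" by (intro mult_right_mono small) (use l in auto)
    finally show ?thesis using True by simp
  next
    case xF: False
    show ?thesis
    proof (cases "y = 0")
      case True
      have "(l * x) powr p = l powr p * x powr p" using l xy by (simp add: powr_mult)
      also have "\<dots> \<le> l * x powr p" by (intro mult_right_mono small) (use l in auto)
      finally show ?thesis using True by simp
    next
      case False
      have "x \<in> {0<..}" "y \<in> {0<..}" using xF False xy by auto
      from convex_onD[OF powr_convex[OF p] l this(2) this(1)]
      show ?thesis by (simp add: algebra_simps)
    qed
  qed
qed

lemma sum_powr_zero:
  fixes \<alpha> :: "'a \<Rightarrow> real"
  assumes "finite I" "p > 0" "\<And>i. 0 \<le> \<alpha> i" "(\<Sum>i\<in>I. \<alpha> i powr p) powr (1/p) = 0"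
  shows "\<forall>i\<in>I. \<alpha> i = 0"
proof -
  have "(\<Sum>i\<in>I. \<alpha> i powr p) = 0" using assms(4) by simp
  then have "\<forall>i\<in>I. \<alpha> i powr p = 0" using assms(1) by (subst (asm) sum_nonneg_eq_0_iff) auto
  then show ?thesis by simp
qed

lemma minkowski:
  fixes \<alpha> \<beta> :: "'a \<Rightarrow> real"
  assumes I: "finite I" and p: "1 \<le> p" and a: "\<And>i. 0 \<le> \<alpha> i" and b: "\<And>i. 0 \<le> \<beta> i"
  shows "(\<Sum>i\<in>I. (\<alpha> i + \<beta> i) powr p) powr (1/p) \<le>
    (\<Sum>i\<in>I. \<alpha> i powr p) powr (1/p) + (\<Sum>i\<in>I. \<beta> i powr p) powr (1/p)"
proof -
  have p0: "p > 0" using p by simp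
  define SA where "SA = (\<Sum>i\<in>I. \<alpha> i powr p)"
  define SB where "SB = (\<Sum>i\<in>I. \<beta> i powr p)"
  define A where "A = SA powr (1/p)"
  define B where "B = SB powr (1/p)"
  have SA0: "0 \<le> SA" unfolding SA_def by (intro sum_nonneg) simp
  have SB0: "0 \<le> SB" unfolding SB_def by (intro sum_nonneg) simp
  have Ap: "A powr p = SA" unfolding A_def using SA0 p0 by (simp add: powr_powr)
  have Bp: "B powr p = SB" unfolding B_def using SB0 p0 by (simp add: powr_powr)
  show ?thesis
  proof (cases "A = 0")
    case True
    have "\<forall>i\<in>I. \<alpha> i = 0" by (rule sum_powr_zero[OF I p0]) (use a True in \<open>auto simp: A_def SA_def\<close>)
    then have "(\<Sum>i\<in>I. (\<alpha> i + \<beta> i) powr p) = SB" unfolding SB_def by (intro sum.cong) auto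
    then show ?thesis using True unfolding A_def[symmetric] SA_def[symmetric] SB_def[symmetric] B_def by simp
  next
    case AF: False
    show ?thesis
    proof (cases "B = 0")
      case True
      have "\<forall>i\<in>I. \<beta> i = 0" by (rule sum_powr_zero[OF I p0]) (use b True in \<open>auto simp: B_def SB_def\<close>)
      then have "(\<Sum>i\<in>I. (\<alpha> i + \<beta> i) powr p) = SA" unfolding SA_def by (intro sum.cong) auto
      then show ?thesis using True unfolding B_def[symmetric] SA_def[symmetric] SB_def[symmetric] A_def by simp
    next
      case BF: False
      have A0: "A > 0" using AF unfolding A_def by simp
      have B0: "B > 0" using BF unfolding B_def by simp
      have "SA \<noteq> 0" using AF unfolding A_def by auto
      then have SAp: "SA > 0" using SA0 by simp
      have "SB \<noteq> 0" using BF unfolding B_def by auto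
      then have SBp: "SB > 0" using SB0 by simp
      define l where "l = A / (A + B)"
      have l0: "0 \<le> l" "l \<le> 1" unfolding l_def using A0 B0 by auto
      have 1: "1 - l = B / (A + B)" unfolding l_def using A0 B0 by (simp add: field_simps)
      have tb: "(\<alpha> i + \<beta> i) powr p \<le> (A + B) powr p * (l * (\<alpha> i powr p / SA) + (1 - l) * (\<beta> i powr p / SB))" for i
      proof -
        have eq: "\<alpha> i + \<beta> i = (A + B) * (l * (\<alpha> i / A) + (1 - l) * (\<beta> i / B))"
        proof -
          have h1: "(A + B) * l = A" unfolding l_def using A0 B0 by simp
          have h2: "(A + B) * (1 - l) = B" unfolding 1 using A0 B0 by simp
          have "(A + B) * (l * (\<alpha> i / A) + (1 - l) * (\<beta> i / B)) = ((A + B) * l) * (\<alpha> i / A) + ((A + B) * (1 - l)) * (\<beta> i / B)"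
            by (simp only: distrib_left mult.assoc)
          also have "\<dots> = \<alpha> i + \<beta> i" unfolding h1 h2 using A0 B0 by simp
          finally show ?thesis by simp
        qed
        have "(\<alpha> i + \<beta> i) powr p = (A + B) powr p * (l * (\<alpha> i / A) + (1 - l) * (\<beta> i / B)) powr p"
          unfolding eq using A0 B0 l0 a[of i] b[of i] by (subst powr_mult) auto
        also have "\<dots> \<le> (A + B) powr p * (l * (\<alpha> i / A) powr p + (1 - l) * (\<beta> i / B) powr p)"
          by (intro mult_left_mono powr_conv p l0) (use a[of i] b[of i] A0 B0 in auto)
        also have "(\<alpha> i / A) powr p = \<alpha> i powr p / SA" using Ap by (simp add: powr_divide)
        also have "(\<beta> i / B) powr p = \<beta> i powr p / SB" using Bp by (simp add: powr_divide)
        finally show ?thesis .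
      qed
      have "(\<Sum>i\<in>I. (\<alpha> i + \<beta> i) powr p) \<le> (\<Sum>i\<in>I. (A + B) powr p * (l * (\<alpha> i powr p / SA) + (1 - l) * (\<beta> i powr p / SB)))"
        by (rule sum_mono) (rule tb)
      also have "\<dots> = (A + B) powr p * (l * (SA / SA) + (1 - l) * (SB / SB))"
        unfolding SA_def SB_def
        by (simp add: sum_distrib_left[symmetric] sum.distrib sum_divide_distrib[symmetric])
      also have "\<dots> = (A + B) powr p" using SAp SBp by simp
      finally have le: "(\<Sum>i\<in>I. (\<alpha> i + \<beta> i) powr p) \<le> (A + B) powr p" .
      have "(\<Sum>i\<in>I. (\<alpha> i + \<beta> i) powr p) powr (1/p) \<le> ((A + B) powr p) powr (1/p)"
        by (intro powr_mono2 le sum_nonneg) (use p0 in auto)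
      also have "\<dots> = A + B" using A0 B0 p0 by (simp add: powr_powr)
      finally show ?thesis unfolding A_def B_def SA_def SB_def .
    qed
  qed
qed

lemma powr_sum_scale:
  fixes x :: "'a \<Rightarrow> real"
  assumes "0 \<le> c" "p > 0" "\<And>i. 0 \<le> x i"
  shows "(\<Sum>i\<in>I. (c * x i) powr p) powr (1/p) = c * (\<Sum>i\<in>I. x i powr p) powr (1/p)"
proof -
  have "(\<Sum>i\<in>I. (c * x i) powr p) = c powr p * (\<Sum>i\<in>I. x i powr p)"
    using assms by (simp add: powr_mult sum_distrib_left)
  then have "(\<Sum>i\<in>I. (c * x i) powr p) powr (1/p) = (c powr p) powr (1/p) * (\<Sum>i\<in>I. x i powr p) powr (1/p)"
    by (simp add: powr_mult sum_nonneg)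
  also have "(c powr p) powr (1/p) = c" using assms by (simp add: powr_powr)
  finally show ?thesis .
qed



lemma pvar_prod:
  fixes B :: "real \<Rightarrow> ('h::real_normed_vector \<Rightarrow>\<^sub>L 'h)" and v :: "real \<Rightarrow> 'h"
  assumes p: "1 \<le> p" and nB: "\<And>t. norm (B t) \<le> SB" and nv: "\<And>t. norm (v t) \<le> Sv"
  shows "pvar_sum p (\<lambda>t. blinfun_apply (B t) (v t)) ts \<le> Sv * pvar_sum p B ts + SB * pvar_sum p v ts"
proof -
  have p0: "p > 0" using p by simp
  have SB0: "0 \<le> SB" using nB[of 0] norm_ge_zero[of "B 0"] by linarith
  have Sv0: "0 \<le> Sv" using nv[of 0] norm_ge_zero[of "v 0"] by linarith
  define I where "I = {..<length ts - 1}"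
  define \<alpha> where "\<alpha> j = Sv * norm (B (ts!Suc j) - B (ts!j))" for j
  define \<beta> where "\<beta> j = SB * norm (v (ts!Suc j) - v (ts!j))" for j
  have a0: "0 \<le> \<alpha> j" for j unfolding \<alpha>_def using Sv0 by simp
  have b0: "0 \<le> \<beta> j" for j unfolding \<beta>_def using SB0 by simp
  have tb: "norm (blinfun_apply (B (ts!Suc j)) (v (ts!Suc j)) - blinfun_apply (B (ts!j)) (v (ts!j))) \<le> \<alpha> j + \<beta> j" for j
  proof -
    define B1 B0 v1 v0 where "B1 = B (ts!Suc j)" and "B0 = B (ts!j)" and "v1 = v (ts!Suc j)" and "v0 = v (ts!j)"
    have "blinfun_apply B1 v1 - blinfun_apply B0 v0 = blinfun_apply (B1 - B0) v1 + blinfun_apply B0 (v1 - v0)"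
      by (simp add: blinfun.diff_left blinfun.diff_right)
    then have "norm (blinfun_apply B1 v1 - blinfun_apply B0 v0) \<le> norm (blinfun_apply (B1 - B0) v1) + norm (blinfun_apply B0 (v1 - v0))"
      by (simp add: norm_triangle_ineq)
    moreover have "norm (blinfun_apply (B1 - B0) v1) \<le> \<alpha> j"
    proof -
      have "norm (blinfun_apply (B1 - B0) v1) \<le> norm (B1 - B0) * norm v1" by (rule norm_blinfun)
      also have "\<dots> \<le> norm (B1 - B0) * Sv" unfolding v1_def by (intro mult_left_mono nv) auto
      finally show ?thesis unfolding \<alpha>_def B1_def B0_def by (simp add: mult.commute)
    qed
    moreover have "norm (blinfun_apply B0 (v1 - v0)) \<le> \<beta> j"
    proof -
      have "norm (blinfun_apply B0 (v1 - v0)) \<le> norm B0 * norm (v1 - v0)" by (rule norm_blinfun)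
      also have "\<dots> \<le> SB * norm (v1 - v0)" unfolding B0_def by (intro mult_right_mono nB) auto
      finally show ?thesis unfolding \<beta>_def v1_def v0_def .
    qed
    ultimately show ?thesis unfolding B1_def B0_def v1_def v0_def by linarith
  qed
  have fI: "finite I" unfolding I_def by simp
  have "pvar_sum p (\<lambda>t. blinfun_apply (B t) (v t)) ts =
     (\<Sum>j\<in>I. norm (blinfun_apply (B (ts!Suc j)) (v (ts!Suc j)) - blinfun_apply (B (ts!j)) (v (ts!j))) powr p) powr (1/p)"
    unfolding pvar_sum_def I_def by simp
  also have "\<dots> \<le> (\<Sum>j\<in>I. (\<alpha> j + \<beta> j) powr p) powr (1/p)"
    by (intro powr_mono2 sum_mono sum_nonneg) (use tb p0 in auto)
  also have "\<dots> \<le> (\<Sum>j\<in>I. \<alpha> j powr p) powr (1/p) + (\<Sum>j\<in>I. \<beta> j powr p) powr (1/p)"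
    by (rule minkowski[OF fI p]) (use a0 b0 in auto)
  finally have le: "pvar_sum p (\<lambda>t. blinfun_apply (B t) (v t)) ts \<le> (\<Sum>j\<in>I. \<alpha> j powr p) powr (1/p) + (\<Sum>j\<in>I. \<beta> j powr p) powr (1/p)" .
  have ea: "(\<Sum>j\<in>I. \<alpha> j powr p) powr (1/p) = Sv * pvar_sum p B ts"
    unfolding \<alpha>_def pvar_sum_def I_def by (rule powr_sum_scale) (use Sv0 p0 in auto)
  have eb: "(\<Sum>j\<in>I. \<beta> j powr p) powr (1/p) = SB * pvar_sum p v ts"
    unfolding \<beta>_def pvar_sum_def I_def by (rule powr_sum_scale) (use SB0 p0 in auto)
  show ?thesis using le unfolding ea eb .
qed

lemma pvar_nonneg: "0 \<le> pvar_sum p v ts"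
  unfolding pvar_sum_def by simp

lemma pvar_nil: "pvar_sum p v [] = 0"
  unfolding pvar_sum_def by simp

lemma Vp_facts:
  assumes "in_Vp p v"
  shows "\<And>t. norm (v t) \<le> (SUP t. norm (v t))"
    "\<And>ts. sorted_wrt (<) ts \<Longrightarrow> pvar_sum p v ts \<le> (SUP ts\<in>{ts. sorted_wrt (<) ts}. pvar_sum p v ts)"
    "0 \<le> (SUP t. norm (v t))" "0 \<le> (SUP ts\<in>{ts. sorted_wrt (<) ts}. pvar_sum p v ts)"
proof -
  have b1: "bdd_above (range (\<lambda>t. norm (v t)))" and b2: "bdd_above (pvar_sum p v ` {ts. sorted_wrt (<) ts})"
    using assms unfolding in_Vp_def by auto
  show n: "norm (v t) \<le> (SUP t. norm (v t))" for t by (rule cSUP_upper[OF _ b1]) simp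
  show pv: "pvar_sum p v ts \<le> (SUP ts\<in>{ts. sorted_wrt (<) ts}. pvar_sum p v ts)" if "sorted_wrt (<) ts" for ts
    by (rule cSUP_upper[OF _ b2]) (use that in simp)
  show "0 \<le> (SUP t. norm (v t))" using n[of 0] norm_ge_zero[of "v 0"] by linarith
  show "0 \<le> (SUP ts\<in>{ts. sorted_wrt (<) ts}. pvar_sum p v ts)"
    using pv[of "[]"] pvar_nil[of p v] by simp
qed

lemma Vp_norm_nonneg: "in_Vp p v \<Longrightarrow> 0 \<le> Vp_norm p v"
  unfolding Vp_norm_def using Vp_facts(3,4) by (metis add_nonneg_nonneg)

lemma Vp_main:
  fixes B :: "real \<Rightarrow> ('h::real_normed_vector \<Rightarrow>\<^sub>L 'h)" and v :: "real \<Rightarrow> 'h"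
  assumes p: "1 \<le> p" and hB: "in_Vp p B" and hv: "in_Vp p v"
  shows "in_Vp p (\<lambda>t. blinfun_apply (B t) (v t)) \<and>
    Vp_norm p (\<lambda>t. blinfun_apply (B t) (v t)) \<le> Vp_norm p B * Vp_norm p v"
proof -
  define SB where "SB = (SUP t. norm (B t))"
  define VB where "VB = (SUP ts\<in>{ts. sorted_wrt (<) ts}. pvar_sum p B ts)"
  define Sv where "Sv = (SUP t. norm (v t))"
  define Vv where "Vv = (SUP ts\<in>{ts. sorted_wrt (<) ts}. pvar_sum p v ts)"
  note FB = Vp_facts[OF hB, folded SB_def VB_def]
  note Fv = Vp_facts[OF hv, folded Sv_def Vv_def]
  have nb: "norm (blinfun_apply (B t) (v t)) \<le> SB * Sv" for t
  proof -
    have "norm (blinfun_apply (B t) (v t)) \<le> norm (B t) * norm (v t)" by (rule norm_blinfun)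
    also have "\<dots> \<le> SB * Sv" by (intro mult_mono FB(1) Fv(1)) (use FB(3) in auto)
    finally show ?thesis .
  qed
  have pb: "pvar_sum p (\<lambda>t. blinfun_apply (B t) (v t)) ts \<le> Sv * VB + SB * Vv" if ts: "sorted_wrt (<) ts" for ts
  proof -
    have "pvar_sum p (\<lambda>t. blinfun_apply (B t) (v t)) ts \<le> Sv * pvar_sum p B ts + SB * pvar_sum p v ts"
      by (rule pvar_prod[OF p FB(1) Fv(1)])
    also have "\<dots> \<le> Sv * VB + SB * Vv"
      by (intro add_mono mult_left_mono FB(2) Fv(2) ts) (use FB(3) Fv(3) in auto)
    finally show ?thesis .
  qed
  have inV: "in_Vp p (\<lambda>t. blinfun_apply (B t) (v t))"
    unfolding in_Vp_def
  proof (intro conjI allI)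
    fix t
    have "continuous (at_right t) B" "continuous (at_right t) v" using hB hv unfolding in_Vp_def by auto
    then show "continuous (at_right t) (\<lambda>t. blinfun_apply (B t) (v t))" by (rule blinfun.continuous)
  next
    have "(B \<longlongrightarrow> 0) at_bot" "(v \<longlongrightarrow> 0) at_bot" using hB hv unfolding in_Vp_def by auto
    from blinfun.tendsto[OF this] show "((\<lambda>t. blinfun_apply (B t) (v t)) \<longlongrightarrow> 0) at_bot" by simp
  next
    show "bdd_above (range (\<lambda>t. norm (blinfun_apply (B t) (v t))))" by (rule bdd_aboveI2[OF nb])
  next
    show "bdd_above (pvar_sum p (\<lambda>t. blinfun_apply (B t) (v t)) ` {ts. sorted_wrt (<) ts})"
      by (rule bdd_aboveI2) (use pb in auto)
  qed
  have s1: "(SUP t. norm (blinfun_apply (B t) (v t))) \<le> SB * Sv"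
    by (rule cSUP_least) (use nb in auto)
  have s2: "(SUP ts\<in>{ts. sorted_wrt (<) ts}. pvar_sum p (\<lambda>t. blinfun_apply (B t) (v t)) ts) \<le> Sv * VB + SB * Vv"
  proof (rule cSUP_least)
    show "{ts. sorted_wrt (<) ts} \<noteq> {}" by (auto intro: exI[of _ "[]"])
  qed (use pb in auto)
  have "Vp_norm p (\<lambda>t. blinfun_apply (B t) (v t)) \<le> SB * Sv + (Sv * VB + SB * Vv)"
    unfolding Vp_norm_def using s1 s2 by linarith
  also have "\<dots> \<le> (SB + VB) * (Sv + Vv)"
    using mult_nonneg_nonneg[OF FB(4) Fv(4)] by (simp add: algebra_simps)
  also have "\<dots> = Vp_norm p B * Vp_norm p v" unfolding Vp_norm_def SB_def VB_def Sv_def Vv_def ..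
  finally show ?thesis using inV by simp
qed

lemma Vp_lin:
  fixes L :: "'h::real_normed_vector \<Rightarrow>\<^sub>L 'h" and v :: "real \<Rightarrow> 'h"
  assumes p: "1 \<le> p" and hv: "in_Vp p v"
  shows "in_Vp p (\<lambda>t. blinfun_apply L (v t))"
proof -
  define Sv where "Sv = (SUP t. norm (v t))"
  define Vv where "Vv = (SUP ts\<in>{ts. sorted_wrt (<) ts}. pvar_sum p v ts)"
  note Fv = Vp_facts[OF hv, folded Sv_def Vv_def]
  have c0: "pvar_sum p (\<lambda>t. L) ts = 0" for ts unfolding pvar_sum_def by simp
  have nb: "norm (blinfun_apply L (v t)) \<le> norm L * Sv" for t
    by (rule order.trans[OF norm_blinfun]) (intro mult_left_mono Fv(1); simp)
  have pb: "pvar_sum p (\<lambda>t. blinfun_apply L (v t)) ts \<le> norm L * Vv" if ts: "sorted_wrt (<) ts" for ts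
  proof -
    have "pvar_sum p (\<lambda>t. blinfun_apply ((\<lambda>t. L) t) (v t)) ts \<le> Sv * pvar_sum p (\<lambda>t. L) ts + norm L * pvar_sum p v ts"
      by (rule pvar_prod[OF p _ Fv(1)]) simp
    also have "\<dots> \<le> norm L * Vv" unfolding c0 by (simp add: mult_left_mono Fv(2) ts)
    finally show ?thesis by simp
  qed
  show ?thesis
    unfolding in_Vp_def
  proof (intro conjI allI)
    fix t
    have "continuous (at_right t) v" using hv unfolding in_Vp_def by auto
    then show "continuous (at_right t) (\<lambda>t. blinfun_apply L (v t))" by (intro continuous_intros)
  next
    have "(v \<longlongrightarrow> 0) at_bot" using hv unfolding in_Vp_def by auto
    from blinfun.tendsto[OF tendsto_const this, of L] show "((\<lambda>t. blinfun_apply L (v t)) \<longlongrightarrow> 0) at_bot" by simp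
  next
    show "bdd_above (range (\<lambda>t. norm (blinfun_apply L (v t))))" by (rule bdd_aboveI2[OF nb])
  next
    show "bdd_above (pvar_sum p (\<lambda>t. blinfun_apply L (v t)) ` {ts. sorted_wrt (<) ts})"
      by (rule bdd_aboveI2) (use pb in auto)
  qed
qed



lemma l2_bound:
  fixes f g :: "int \<Rightarrow> real"
  assumes g: "g summable_on UNIV" and f0: "\<And>k. 0 \<le> f k" and fg: "\<And>k. f k \<le> N\<^sup>2 * g k" and N: "0 \<le> N"
  shows "f summable_on UNIV \<and> sqrt (infsum f UNIV) \<le> N * sqrt (infsum g UNIV)"
proof
  have g2: "(\<lambda>k. N\<^sup>2 * g k) summable_on UNIV" by (rule summable_on_cmult_right[OF g])
  show fs: "f summable_on UNIV" by (rule summable_on_comparison_test[OF g2]) (use fg f0 in auto)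
  have "infsum f UNIV \<le> infsum (\<lambda>k. N\<^sup>2 * g k) UNIV" by (rule infsum_mono[OF fs g2 fg])
  also have "\<dots> = N\<^sup>2 * infsum g UNIV" by (rule infsum_cmult_right[OF g])
  finally have "sqrt (infsum f UNIV) \<le> sqrt (N\<^sup>2 * infsum g UNIV)" by simp
  also have "\<dots> = N * sqrt (infsum g UNIV)" using N by (simp add: real_sqrt_mult)
  finally show "sqrt (infsum f UNIV) \<le> N * sqrt (infsum g UNIV)" .
qed

lemma sq_bound:
  fixes X N Y :: real
  assumes "0 \<le> X" "X \<le> N * Y"
  shows "X\<^sup>2 \<le> N\<^sup>2 * Y\<^sup>2"
proof -
  have "X\<^sup>2 \<le> (N * Y)\<^sup>2" by (rule power_mono) (use assms in auto)
  then show ?thesis by (simp add: power_mult_distrib)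
qed

theorem lemma2p7:
  fixes p :: real
    and A B :: "real \<Rightarrow> ('h::{real_inner,complete_space} \<Rightarrow>\<^sub>L 'h)"
    and P :: "int \<Rightarrow> ('h \<Rightarrow>\<^sub>L 'h)"
    and u v :: "real \<Rightarrow> 'h"
  assumes "1 \<le> p"
    and "in_Up p A" and "in_Vp p B"
    and "in_Up p u" and "in_Vp p v"
  shows "in_Up p (\<lambda>t. blinfun_apply (A t) (u t))
    \<and> in_Vp p (\<lambda>t. blinfun_apply (B t) (v t))
    \<and> Up_norm p (\<lambda>t. blinfun_apply (A t) (u t)) \<le> Up_norm p A * Up_norm p u
    \<and> Vp_norm p (\<lambda>t. blinfun_apply (B t) (v t)) \<le> Vp_norm p B * Vp_norm p v
    \<and> ((\<forall>k t. A t o\<^sub>L P k = P k o\<^sub>L A t) \<longrightarrow> l2Up_sq p P u summable_on UNIV \<longrightarrow>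
         l2Up_sq p P (\<lambda>t. blinfun_apply (A t) (u t)) summable_on UNIV \<and>
         l2Up_norm p P (\<lambda>t. blinfun_apply (A t) (u t)) \<le> Up_norm p A * l2Up_norm p P u)
    \<and> ((\<forall>k t. B t o\<^sub>L P k = P k o\<^sub>L B t) \<longrightarrow> l2Vp_sq p P v summable_on UNIV \<longrightarrow>
         l2Vp_sq p P (\<lambda>t. blinfun_apply (B t) (v t)) summable_on UNIV \<and>
         l2Vp_norm p P (\<lambda>t. blinfun_apply (B t) (v t)) \<le> Vp_norm p B * l2Vp_norm p P v)"
proof -
  have p0: "p > 0" using assms(1) by simp
  note U = Up_main[OF p0 assms(2) assms(4)]
  note V = Vp_main[OF assms(1) assms(3) assms(5)]
  have UL: "(\<forall>k t. A t o\<^sub>L P k = P k o\<^sub>L A t) \<longrightarrow> l2Up_sq p P u summable_on UNIV \<longrightarrow>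
         l2Up_sq p P (\<lambda>t. blinfun_apply (A t) (u t)) summable_on UNIV \<and>
         l2Up_norm p P (\<lambda>t. blinfun_apply (A t) (u t)) \<le> Up_norm p A * l2Up_norm p P u"
  proof (intro impI)
    assume comm: "\<forall>k t. A t o\<^sub>L P k = P k o\<^sub>L A t" and summ: "l2Up_sq p P u summable_on UNIV"
    have sw: "blinfun_apply (P k) (blinfun_apply (A t) x) = blinfun_apply (A t) (blinfun_apply (P k) x)" for k t x
      using arg_cong[OF spec[OF spec[OF comm, of k], of t], of "\<lambda>M. blinfun_apply M x"] by simp
    have bnd: "l2Up_sq p P (\<lambda>t. blinfun_apply (A t) (u t)) k \<le> (Up_norm p A)\<^sup>2 * l2Up_sq p P u k" for k
    proof -
      have inPu: "in_Up p (\<lambda>t. blinfun_apply (P k) (u t))" by (rule Up_lin[OF p0 assms(4)])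
      note Uk = Up_main[OF p0 assms(2) inPu]
      have "l2Up_sq p P (\<lambda>t. blinfun_apply (A t) (u t)) k = (Up_norm p (\<lambda>t. blinfun_apply (A t) (blinfun_apply (P k) (u t))))\<^sup>2"
        unfolding l2Up_sq_def sw ..
      also have "\<dots> \<le> (Up_norm p A)\<^sup>2 * l2Up_sq p P u k"
        unfolding l2Up_sq_def by (rule sq_bound) (use Uk Up_norm_nonneg in auto)
      finally show ?thesis .
    qed
    show "l2Up_sq p P (\<lambda>t. blinfun_apply (A t) (u t)) summable_on UNIV \<and>
         l2Up_norm p P (\<lambda>t. blinfun_apply (A t) (u t)) \<le> Up_norm p A * l2Up_norm p P u"
      unfolding l2Up_norm_def
      by (rule l2_bound[OF summ _ bnd Up_norm_nonneg[OF assms(2)]]) (simp add: l2Up_sq_def)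
  qed
  have VL: "(\<forall>k t. B t o\<^sub>L P k = P k o\<^sub>L B t) \<longrightarrow> l2Vp_sq p P v summable_on UNIV \<longrightarrow>
         l2Vp_sq p P (\<lambda>t. blinfun_apply (B t) (v t)) summable_on UNIV \<and>
         l2Vp_norm p P (\<lambda>t. blinfun_apply (B t) (v t)) \<le> Vp_norm p B * l2Vp_norm p P v"
  proof (intro impI)
    assume comm: "\<forall>k t. B t o\<^sub>L P k = P k o\<^sub>L B t" and summ: "l2Vp_sq p P v summable_on UNIV"
    have sw: "blinfun_apply (P k) (blinfun_apply (B t) x) = blinfun_apply (B t) (blinfun_apply (P k) x)" for k t x
      using arg_cong[OF spec[OF spec[OF comm, of k], of t], of "\<lambda>M. blinfun_apply M x"] by simp
    have bnd: "l2Vp_sq p P (\<lambda>t. blinfun_apply (B t) (v t)) k \<le> (Vp_norm p B)\<^sup>2 * l2Vp_sq p P v k" for k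
    proof -
      have inPv: "in_Vp p (\<lambda>t. blinfun_apply (P k) (v t))" by (rule Vp_lin[OF assms(1) assms(5)])
      note Vk = Vp_main[OF assms(1) assms(3) inPv]
      have "l2Vp_sq p P (\<lambda>t. blinfun_apply (B t) (v t)) k = (Vp_norm p (\<lambda>t. blinfun_apply (B t) (blinfun_apply (P k) (v t))))\<^sup>2"
        unfolding l2Vp_sq_def sw ..
      also have "\<dots> \<le> (Vp_norm p B)\<^sup>2 * l2Vp_sq p P v k"
        unfolding l2Vp_sq_def by (rule sq_bound) (use Vk Vp_norm_nonneg in auto)
      finally show ?thesis .
    qed
    show "l2Vp_sq p P (\<lambda>t. blinfun_apply (B t) (v t)) summable_on UNIV \<and>
         l2Vp_norm p P (\<lambda>t. blinfun_apply (B t) (v t)) \<le> Vp_norm p B * l2Vp_norm p P v"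
      unfolding l2Vp_norm_def
      by (rule l2_bound[OF summ _ bnd Vp_norm_nonneg[OF assms(3)]]) (simp add: l2Vp_sq_def)
  qed
  show ?thesis using U V UL VL by blast
qed

end
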